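(* Let $(X_i)_{i\in\mathbb{N}}$ be a GBP-I with parameters $p,H,c$ satisfying the standing assumption and $H\in(1/2,1)$. Then for every $k\ge2$, as $n\to\infty$, \[ \sum_{\substack{i_1,\dots,i_k\in\{1,\dots,n\}\\ i_1<\dots<i_k}}P\Big(\bigcap_{j=1}^k\{X_{i_j}=1\}\Big)=\binom{n}{k}p^k+\frac{\Gamma(2H-1)}{\Gamma(2H+k-1)}\,\frac{(k-1)!}{(k-2)!}\,c\,p^{k-1}\,n^{2H-2+k}+o\big(n^{2H-2+k}\big). \]
   Context: Standing assumption on GBP-I parameters: $p,H\in(0,1)$ and $0\le c<\min\{1-p,\ \tfrac12(-2p+2^{2H-2}+\sqrt{4p-p2^{2H}+2^{4H-4}})\}$. A GBP-I is a $\{0,1\}$-valued process $(X_i)_{i\in\mathbb{N}}$ with $P(X_{i_0}=X_{i_1}=\dots=X_{i_n}=1)=p\prod_{j=1}^n(p+c|i_j-i_{j-1}|^{2H-2})$ for $i_0<i_1<\dots<i_n$ (with the remaining joint probabilities determined by inclusion–exclusion). *)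

theory Defs
  imports "HOL-Probability.Probability" "HOL-Library.Landau_Symbols"
begin

definition gbp_params :: "real \<Rightarrow> real \<Rightarrow> real \<Rightarrow> bool" where
  "gbp_params p H c \<longleftrightarrow> 0 < p \<and> p < 1 \<and> 0 < H \<and> H < 1 \<and> 0 \<le> c \<and>
     c < min (1 - p)
       ((1/2) * (- 2 * p + 2 powr (2*H - 2)
          + sqrt (4 * p - p * 2 powr (2*H) + 2 powr (4*H - 4))))"

definition GBP_I :: "'a measure \<Rightarrow> (nat \<Rightarrow> 'a \<Rightarrow> nat) \<Rightarrow> real \<Rightarrow> real \<Rightarrow> real \<Rightarrow> bool" where
  "GBP_I M X p H c \<longleftrightarrow> prob_space M \<and> gbp_params p H c \<and>
     (\<forall>i. X i \<in> measurable M (count_space UNIV)) \<and>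
     (\<forall>i. \<forall>\<omega>\<in>space M. X i \<omega> \<in> {0, 1}) \<and>
     (\<forall>is. is \<noteq> [] \<longrightarrow> sorted_wrt (<) is \<longrightarrow>
        measure M {\<omega> \<in> space M. \<forall>i\<in>set is. X i \<omega> = 1} =
        p * (\<Prod>j\<in>{1..<length is}.
               (p + c * (real (is ! j) - real (is ! (j - 1))) powr (2*H - 2))))"

end

theory Submission
  imports Defs
begin


fun gaps :: "nat list \<Rightarrow> nat list" where
  "gaps (a # b # l) = (b - a) # gaps (b # l)"
| "gaps _ = []"

lemma length_gaps: "length (gaps l) = length l - 1"
  by (induction l rule: gaps.induct) auto

lemma gaps_pos: "sorted_wrt (<) l \<Longrightarrow> d \<in> set (gaps l) \<Longrightarrow> 0 < d"
  by (induction l rule: gaps.induct) auto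

lemma prod_gaps:
  "sorted_wrt (<) l \<Longrightarrow>
   (\<Prod>j\<in>{1..<length l}. \<phi> (real (l!j) - real (l!(j-1)))) = (\<Prod>d\<leftarrow>gaps l. \<phi> (real d))"
proof (induction l rule: gaps.induct)
  case (1 a b l)
  have "(\<Prod>j\<in>{1..<length (a#b#l)}. \<phi> (real ((a#b#l)!j) - real ((a#b#l)!(j-1))))
      = \<phi> (real b - real a) * (\<Prod>j\<in>{Suc 1..<Suc (length (b#l))}. \<phi> (real ((a#b#l)!j) - real ((a#b#l)!(j-1))))"
    by (subst prod.atLeast_Suc_lessThan) auto
  also have "(\<Prod>j\<in>{Suc 1..<Suc (length (b#l))}. \<phi> (real ((a#b#l)!j) - real ((a#b#l)!(j-1))))
      = (\<Prod>j\<in>{1..<length (b#l)}. \<phi> (real ((b#l)!j) - real ((b#l)!(j-1))))"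
    by (subst prod.shift_bounds_Suc_ivl) (auto intro!: prod.cong simp: nth_Cons')
  also have "\<dots> = (\<Prod>d\<leftarrow>gaps (b#l). \<phi> (real d))"
    using 1 by auto
  finally show ?case using 1(2) by (simp add: of_nat_diff)
qed auto

lemma finite_subsets_card: "finite {S. S \<subseteq> {a..n::nat} \<and> card S = k}"
  by (rule finite_subset[of _ "Pow {a..n}"]) auto

lemma sum_split_min:
  "(\<Sum>S | S \<subseteq> {a..n} \<and> card S = Suc k. F (sorted_list_of_set S)) =
   (\<Sum>i\<in>{a..n}. \<Sum>S | S \<subseteq> {Suc i..n} \<and> card S = k. F (i # sorted_list_of_set S))"
proof -
  have "(\<Sum>i\<in>{a..n}. \<Sum>S | S \<subseteq> {Suc i..n} \<and> card S = k. F (i # sorted_list_of_set S))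
      = (\<Sum>(i,S)\<in>Sigma {a..n} (\<lambda>i. {S. S \<subseteq> {Suc i..n} \<and> card S = k}). F (i # sorted_list_of_set S))"
    by (rule sum.Sigma) (auto simp: finite_subsets_card)
  also have "\<dots> = (\<Sum>S | S \<subseteq> {a..n} \<and> card S = Suc k. F (sorted_list_of_set S))"
  proof (rule sum.reindex_bij_witness[where i = "\<lambda>S. (Min S, S - {Min S})" and j = "\<lambda>(i,S). insert i S"])
    fix x assume x: "x \<in> Sigma {a..n} (\<lambda>i. {S. S \<subseteq> {Suc i..n} \<and> card S = k})"
    obtain i S where xi: "x = (i,S)" by (cases x)
    have fin: "finite S" using x xi by (auto intro: finite_subset)
    have mi: "Min (insert i S) = i" using x xi fin
      by (auto intro!: Min_eqI)
    have ni: "i \<notin> S" using x xi by auto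
    show "(Min (case x of (i, S) \<Rightarrow> insert i S), (case x of (i, S) \<Rightarrow> insert i S) - {Min (case x of (i, S) \<Rightarrow> insert i S)})= x"
      using mi ni xi by auto
    show "(case x of (i, S) \<Rightarrow> insert i S) \<in> {S. S \<subseteq> {a..n} \<and> card S = Suc k}"
      using x xi fin ni by auto
    show "F (sorted_list_of_set (case x of (i, S) \<Rightarrow> insert i S)) = (case x of (i, S) \<Rightarrow> F (i # sorted_list_of_set S))"
      using xi mi ni fin sorted_list_of_set_nonempty[of "insert i S"] by auto
  next
    fix S assume S: "S \<in> {S. S \<subseteq> {a..n} \<and> card S = Suc k}"
    have fin: "finite S" using S by (auto intro: finite_subset)
    have ne: "S \<noteq> {}" using S by auto
    have mS: "Min S \<in> S" using fin ne by auto
    show "(case (Min S, S - {Min S}) of (i, S) \<Rightarrow> insert i S) = S"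
      using mS by auto
    have "\<forall>x\<in>S - {Min S}. Min S < x" using fin ne
      by (metis DiffE Min_le order_le_neq_trans singletonI)
    then show "(Min S, S - {Min S}) \<in> Sigma {a..n} (\<lambda>i. {S. S \<subseteq> {Suc i..n} \<and> card S = k})"
      using S mS fin by (auto simp: Suc_le_eq subset_iff)
  qed
  finally show ?thesis ..
qed

definition Qh :: "(nat \<Rightarrow> real) \<Rightarrow> nat \<Rightarrow> nat \<Rightarrow> nat \<Rightarrow> real" where
  "Qh h a n k = (\<Sum>S | S \<subseteq> {a..n} \<and> card S = k. sum_list (map h (gaps (sorted_list_of_set S))))"

definition f :: "(nat \<Rightarrow> real) \<Rightarrow> nat \<Rightarrow> nat \<Rightarrow> real" where
  "f h k r = (\<Sum>j\<in>{1..r}. h j * real (r - j choose (k - 1)))"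

fun q :: "(nat \<Rightarrow> real) \<Rightarrow> nat \<Rightarrow> nat \<Rightarrow> real" where
  "q h 0 m = 0" | "q h (Suc 0) m = 0"
| "q h (Suc (Suc k)) m = (\<Sum>r<m. f h (Suc k) r + q h (Suc k) r)"

lemma Fh_eq:
  assumes "i \<le> n"
  shows "(\<Sum>S | S \<subseteq> {Suc i..n} \<and> card S = Suc k. h (Min S - i)) = f h (Suc k) (n - i)"
proof -
  have "(\<Sum>S | S \<subseteq> {Suc i..n} \<and> card S = Suc k. h (Min S - i))
     = (\<Sum>S | S \<subseteq> {Suc i..n} \<and> card S = Suc k. (\<lambda>l. h (hd l - i)) (sorted_list_of_set S))"
  proof (rule sum.cong)
    fix S assume "S \<in> {S. S \<subseteq> {Suc i..n} \<and> card S = Suc k}"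
    then have "finite S" "S \<noteq> {}" by (auto intro: finite_subset)
    then show "h (Min S - i) = (\<lambda>l. h (hd l - i)) (sorted_list_of_set S)"
      using sorted_list_of_set_nonempty[of S] by simp
  qed simp
  also have "\<dots> = (\<Sum>j\<in>{Suc i..n}. \<Sum>S | S \<subseteq> {Suc j..n} \<and> card S = k. h (j - i))"
    by (subst sum_split_min) simp
  also have "\<dots> = (\<Sum>j\<in>{Suc i..n}. h (j - i) * real (n - j choose k))"
    by (intro sum.cong refl) (simp add: n_subsets)
  also have "\<dots> = (\<Sum>j\<in>{1..n-i}. h j * real (n - i - j choose k))"
  proof -
    have "{Suc i..n} = {1+i..(n-i)+i}" using assms by auto
    then show ?thesis
      by (simp only: sum.shift_bounds_cl_nat_ivl) (intro sum.cong refl, auto simp: add.commute)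
  qed
  finally show ?thesis by (simp add: f_def)
qed

lemma sum_rev_ivl: "(\<Sum>i\<in>{a..n}. g (n - i)) = (\<Sum>r<Suc n - a. (g r :: real))"
  by (rule sum.reindex_bij_witness[where i = "\<lambda>r. n - r" and j = "\<lambda>i. n - i"]) auto

lemma Qh_q: "Qh h a n (Suc k) = q h (Suc k) (Suc n - a)"
proof (induction k arbitrary: a)
  case 0
  show ?case unfolding Qh_def
    by (auto intro!: sum.neutral simp: card_1_singleton_iff)
next
  case (Suc k)
  have "Qh h a n (Suc (Suc k)) = (\<Sum>i\<in>{a..n}. \<Sum>S | S \<subseteq> {Suc i..n} \<and> card S = Suc k.
          (\<lambda>l. sum_list (map h (gaps l))) (i # sorted_list_of_set S))"
    unfolding Qh_def by (rule sum_split_min)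
  also have "\<dots> = (\<Sum>i\<in>{a..n}. \<Sum>S | S \<subseteq> {Suc i..n} \<and> card S = Suc k.
          h (Min S - i) + sum_list (map h (gaps (sorted_list_of_set S))))"
  proof (intro sum.cong refl)
    fix i S assume "S \<in> {S. S \<subseteq> {Suc i..n} \<and> card S = Suc k}"
    then have "finite S" "S \<noteq> {}" by (auto intro: finite_subset)
    then show "(\<lambda>l. sum_list (map h (gaps l))) (i # sorted_list_of_set S)
          = h (Min S - i) + sum_list (map h (gaps (sorted_list_of_set S)))"
      using sorted_list_of_set_nonempty[of S] by simp
  qed
  also have "\<dots> = (\<Sum>i\<in>{a..n}. f h (Suc k) (n - i) + q h (Suc k) (n - i))"
    by (intro sum.cong refl) (simp add: sum.distrib Fh_eq Suc.IH[unfolded Qh_def])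
  also have "\<dots> = q h (Suc (Suc k)) (Suc n - a)"
    by (subst sum_rev_ivl[where g = "\<lambda>r. f h (Suc k) r + q h (Suc k) r"]) simp
  finally show ?case .
qed

lemma f_Suc_Suc: "f h (Suc (Suc k)) (Suc r) = f h (Suc (Suc k)) r + f h (Suc k) r"
proof -
  have "f h (Suc (Suc k)) (Suc r) = (\<Sum>j\<in>{1..r}. h j * real (Suc r - j choose Suc k))"
    unfolding f_def by (simp add: sum.cl_ivl_Suc)
  also have "\<dots> = (\<Sum>j\<in>{1..r}. h j * real (r - j choose Suc k) + h j * real (r - j choose k))"
    by (intro sum.cong refl) (simp add: Suc_diff_le algebra_simps)
  finally show ?thesis unfolding f_def by (simp add: sum.distrib)
qed

lemma f_prefix: "f h (Suc (Suc k)) m = (\<Sum>r<m. f h (Suc k) r)"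
  by (induction m) (auto simp: f_Suc_Suc, simp add: f_def)



lemma mvt_pow:
  fixes x e :: real assumes "0 < x"
  obtains z where "x < z" "z < x + 1" "(x+1) powr (e+1) - x powr (e+1) = (e+1) * z powr e"
proof -
  have der: "((\<lambda>t. t powr (e+1)) has_real_derivative (e+1) * t powr e) (at t)" if "x \<le> t" for t
  proof -
    have "0 < t" using assms that by simp
    from has_real_derivative_powr[OF this, of "e+1"] show ?thesis by simp
  qed
  have "\<exists>z. x < z \<and> z < x+1 \<and> (x+1) powr (e+1) - x powr (e+1) = (x + 1 - x) * ((e+1) * z powr e)"
    by (rule MVT2[where f = "\<lambda>t. t powr (e+1)" and f' = "\<lambda>t. (e+1) * t powr e"])
       (use der in auto)
  then show ?thesis using that by auto
qed

lemma pow_bounds_pos: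
  fixes x e :: real assumes "0 \<le> x" "0 \<le> e"
  shows "(e+1) * x powr e \<le> (x+1) powr (e+1) - x powr (e+1)"
    and "(x+1) powr (e+1) - x powr (e+1) \<le> (e+1) * (x+1) powr e"
proof -
  have "(e+1) * x powr e \<le> (x+1) powr (e+1) - x powr (e+1) \<and> (x+1) powr (e+1) - x powr (e+1) \<le> (e+1) * (x+1) powr e"
  proof (cases "x = 0")
    case True then show ?thesis using assms by simp
  next
    case False
    then have "0 < x" using assms by simp
    then obtain z where z: "x < z" "z < x + 1" "(x+1) powr (e+1) - x powr (e+1) = (e+1) * z powr e"
      by (rule mvt_pow)
    have "x powr e \<le> z powr e" "z powr e \<le> (x+1) powr e"
      using z assms by (auto intro!: powr_mono2)
    then show ?thesis using z assms by (auto intro!: mult_left_mono)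
  qed
  then show "(e+1) * x powr e \<le> (x+1) powr (e+1) - x powr (e+1)"
    and "(x+1) powr (e+1) - x powr (e+1) \<le> (e+1) * (x+1) powr e" by auto
qed

lemma pow_bounds_neg:
  fixes x e :: real assumes "0 < x" "-1 < e" "e \<le> 0"
  shows "(e+1) * (x+1) powr e \<le> (x+1) powr (e+1) - x powr (e+1)"
    and "(x+1) powr (e+1) - x powr (e+1) \<le> (e+1) * x powr e"
proof -
  obtain z where z: "x < z" "z < x + 1" "(x+1) powr (e+1) - x powr (e+1) = (e+1) * z powr e"
    using assms(1) by (rule mvt_pow)
  have "z powr e \<le> x powr e" "(x+1) powr e \<le> z powr e"
    using z assms by (auto intro!: powr_mono2')
  then show "(e+1) * (x+1) powr e \<le> (x+1) powr (e+1) - x powr (e+1)"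
    and "(x+1) powr (e+1) - x powr (e+1) \<le> (e+1) * x powr e"
    using z assms by (auto intro!: mult_left_mono)
qed

lemma powsum_pos:
  fixes e :: real assumes "0 \<le> e"
  shows "(\<Sum>r<m. real r powr e) \<le> real m powr (e+1) / (e+1) \<and>
         real m powr (e+1) / (e+1) \<le> (\<Sum>r<m. real r powr e) + real m powr e"
proof (induction m)
  case 0 then show ?case by simp
next
  case (Suc m)
  have b1: "(e+1) * real m powr e \<le> (real m+1) powr (e+1) - real m powr (e+1)"
   and b2: "(real m+1) powr (e+1) - real m powr (e+1) \<le> (e+1) * (real m+1) powr e"
    using pow_bounds_pos[of "real m" e] assms by auto
  have ep: "0 < e + 1" using assms by simp
  from b1 have b1': "real m powr e \<le> ((real m+1) powr (e+1) - real m powr (e+1)) / (e+1)"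
    using ep by (simp add: field_simps)
  from b2 have b2': "((real m+1) powr (e+1) - real m powr (e+1)) / (e+1) \<le> (real m+1) powr e"
    using ep by (simp add: field_simps)
  have eq: "(real m+1) powr (e+1) / (e+1) = real m powr (e+1) / (e+1) + ((real m+1) powr (e+1) - real m powr (e+1)) / (e+1)"
    by (simp add: diff_divide_distrib)
  show ?case using Suc b1' b2' eq by (simp add: add.commute)
qed

lemma powsum_neg:
  fixes e :: real assumes "-1 < e" "e \<le> 0"
  shows "\<bar>(\<Sum>j\<in>{1..r}. real j powr e) - real r powr (e+1) / (e+1)\<bar> \<le> 1 + 1/(e+1)"
proof -
  have ep: "0 < e + 1" using assms by simp
  have main: "((real r+1) powr (e+1) - 1)/(e+1) \<le> (\<Sum>j\<in>{1..r}. real j powr e) \<and>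
        (\<Sum>j\<in>{1..r}. real j powr e) \<le> 1 + (real r powr (e+1) - 1)/(e+1)" if "r \<ge> 1" for r
    using that
  proof (induction r rule: dec_induct)
    case base
    have "(1+1) powr (e+1) - 1 powr (e+1) \<le> (e+1) * 1 powr e"
      using pow_bounds_neg(2)[of 1 e] assms by simp
    then show ?case using ep by (simp add: field_simps)
  next
    case (step r)
    have b1: "(e+1) * (real r+1+1) powr e \<le> (real r+1+1) powr (e+1) - (real r + 1) powr (e+1)"
     and b2: "(real r+1+1) powr (e+1) - (real r+1) powr (e+1) \<le> (e+1) * (real r+1) powr e"
      using pow_bounds_neg[of "real r + 1" e] assms by auto
    have b3: "(e+1) * (real r+1) powr e \<le> (real r+1) powr (e+1) - (real r) powr (e+1)"
      using pow_bounds_neg(1)[of "real r" e] assms step by auto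
    have s: "(\<Sum>j\<in>{1..Suc r}. real j powr e) = (\<Sum>j\<in>{1..r}. real j powr e) + (real r + 1) powr e"
      by (simp add: sum.cl_ivl_Suc add.commute)
    show ?case using step.IH b2 b3 ep unfolding s
      by (auto simp: field_simps add.commute)
  qed
  show ?thesis
  proof (cases "r = 0")
    case True then show ?thesis using ep by simp
  next
    case False
    then have "r \<ge> 1" by simp
    have m1: "(real r powr (e+1) - 1)/(e+1) \<le> ((real r+1) powr (e+1) - 1)/(e+1)"
    proof -
      have "real r powr (e+1) \<le> (real r + 1) powr (e+1)" using ep by (intro powr_mono2) auto
      then show ?thesis using ep by (intro divide_right_mono) auto
    qed
    have pos: "0 < 1/(e+1)" using ep by simp
    have d1: "(real r powr (e+1) - 1)/(e+1) = real r powr (e+1)/(e+1) - 1/(e+1)"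
      by (simp add: diff_divide_distrib)
    have m2: "((real r+1) powr (e+1) - 1)/(e+1) \<le> (\<Sum>j\<in>{1..r}. real j powr e)"
      "(\<Sum>j\<in>{1..r}. real j powr e) \<le> 1 + (real r powr (e+1) - 1)/(e+1)"
      using main[OF \<open>r\<ge>1\<close>] by auto
    have "real r powr (e+1) / (e+1) - 1/(e+1) \<le> (\<Sum>j\<in>{1..r}. real j powr e)"
        "(\<Sum>j\<in>{1..r}. real j powr e) \<le> 1 + real r powr (e+1) / (e+1)"
      using m1 m2 pos d1 by linarith+
    then show ?thesis using pos unfolding abs_le_iff by linarith
  qed
qed

lemma powr_o: "a < b \<Longrightarrow> (\<lambda>n::nat. real n powr a) \<in> o(\<lambda>n. real n powr b)"
  using powr_smallo_iff[OF filterlim_real_sequentially] by simp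

lemma const_o: "0 < b \<Longrightarrow> (\<lambda>n::nat. K) \<in> o(\<lambda>n. real n powr b)"
proof -
  assume b: "0 < b"
  have "(\<lambda>n::nat. K) \<in> O(\<lambda>n. real n powr 0)"
  proof (rule landau_o.bigI[of "\<bar>K\<bar> + 1"])
    show "eventually (\<lambda>n::nat. norm K \<le> (\<bar>K\<bar> + 1) * norm (real n powr 0)) at_top"
      using eventually_ge_at_top[of "1::nat"] by eventually_elim auto
  qed simp
  also have "(\<lambda>n::nat. real n powr 0) \<in> o(\<lambda>n. real n powr b)" using b by (rule powr_o)
  finally show ?thesis .
qed

lemma prefix_asym:
  fixes a :: "nat \<Rightarrow> real"
  assumes e: "0 < e" and A: "(\<lambda>n. a n - C * real n powr e) \<in> o(\<lambda>n. real n powr e)"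
  shows "(\<lambda>m. (\<Sum>r<m. a r) - C/(e+1) * real m powr (e+1)) \<in> o(\<lambda>m. real m powr (e+1))"
proof (rule landau_o.smallI)
  fix c :: real assume c: "c > 0"
  define d where "d = c / 3"
  have d: "d > 0" using c by (simp add: d_def)
  define \<epsilon> where "\<epsilon> n = a n - C * real n powr e" for n
  from landau_o.smallD[OF A d] obtain N where N: "\<And>n. n \<ge> N \<Longrightarrow> \<bar>\<epsilon> n\<bar> \<le> d * real n powr e"
    unfolding \<epsilon>_def eventually_at_top_linorder by auto
  define K where "K = (\<Sum>r<N. \<bar>\<epsilon> r\<bar>)"
  define N' where "N' = N + 1 + nat \<lceil>\<bar>C\<bar>/d\<rceil> + nat \<lceil>K/d\<rceil>"
  show "eventually (\<lambda>m. norm ((\<Sum>r<m. a r) - C/(e+1) * real m powr (e+1)) \<le> c * norm (real m powr (e+1))) at_top"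
    unfolding eventually_at_top_linorder
  proof (intro exI[of _ N'] allI impI)
    fix m assume m: "m \<ge> N'"
    have m1: "real m \<ge> 1" and mN: "m \<ge> N" and mC: "real m \<ge> \<bar>C\<bar>/d" and mK: "real m \<ge> K/d"
      using m unfolding N'_def by (auto, linarith+)
    define S where "S = (\<Sum>r<m. real r powr e)"
    have PS: "S \<le> real m powr (e+1) / (e+1)" "real m powr (e+1) / (e+1) \<le> S + real m powr e"
      using powsum_pos[of e m] e by (auto simp: S_def)
    have pw: "real m powr (e+1) = real m * real m powr e"
      using m1 by (simp add: powr_add)
    have pm: "real m powr (e+1) \<ge> real m"
      using powr_mono[of 1 "e+1" "real m"] m1 e by simp
    have ep: "0 < e + 1" using e by simp
    have dec: "(\<Sum>r<m. a r) - C/(e+1) * real m powr (e+1) = C * (S - real m powr (e+1)/(e+1)) + (\<Sum>r<m. \<epsilon> r)"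
      by (simp add: \<epsilon>_def S_def sum_subtractf sum_distrib_left algebra_simps)
    have t1: "\<bar>C * (S - real m powr (e+1)/(e+1))\<bar> \<le> d * real m powr (e+1)"
    proof -
      have "\<bar>C * (S - real m powr (e+1)/(e+1))\<bar> \<le> \<bar>C\<bar> * real m powr e"
        using PS by (auto simp: abs_mult intro!: mult_left_mono)
      also have "\<dots> \<le> (d * real m) * real m powr e"
        using mC d by (intro mult_right_mono) (auto simp: field_simps)
      finally show ?thesis using pw by simp
    qed
    have "\<bar>\<Sum>r<m. \<epsilon> r\<bar> \<le> (\<Sum>r<m. \<bar>\<epsilon> r\<bar>)" by (rule sum_abs)
    also have "\<dots> = K + (\<Sum>r\<in>{N..<m}. \<bar>\<epsilon> r\<bar>)"
      unfolding K_def using mN by (metis lessThan_atLeast0 sum.atLeastLessThan_concat le0)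
    also have "(\<Sum>r\<in>{N..<m}. \<bar>\<epsilon> r\<bar>) \<le> (\<Sum>r\<in>{N..<m}. d * real r powr e)"
      by (intro sum_mono N) auto
    also have "\<dots> \<le> (\<Sum>r<m. d * real r powr e)"
      by (intro sum_mono2) (use d in auto)
    also have "\<dots> = d * S" by (simp add: S_def sum_distrib_left)
    also have "\<dots> \<le> d * real m powr (e+1)"
    proof -
      have "real m powr (e+1) \<le> real m powr (e+1) * (e+1)" using e by (simp add: algebra_simps)
      then have "real m powr (e+1) / (e+1) \<le> real m powr (e+1)" using ep by (simp add: divide_le_eq)
      then have "S \<le> real m powr (e+1)" using PS by linarith
      then show ?thesis using d by simp
    qed
    finally have t2: "\<bar>\<Sum>r<m. \<epsilon> r\<bar> \<le> K + d * real m powr (e+1)" by simp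
    have t3: "K \<le> d * real m powr (e+1)"
    proof -
      have "K \<le> d * real m" using mK d by (simp add: field_simps)
      also have "\<dots> \<le> d * real m powr (e+1)" using pm d by simp
      finally show ?thesis .
    qed
    have "norm ((\<Sum>r<m. a r) - C/(e+1) * real m powr (e+1)) \<le> 3 * d * real m powr (e+1)"
      unfolding dec using t1 t2 t3 by simp
    then show "norm ((\<Sum>r<m. a r) - C/(e+1) * real m powr (e+1)) \<le> c * norm (real m powr (e+1))"
      by (simp add: d_def)
  qed
qed



lemma two_y_S:
  fixes ys :: "real list"
  shows "2 * y * sum_list ys \<le> real (length ys) * y^2 + sum_list (map (\<lambda>z. z^2) ys)"
proof (induction ys)
  case Nil then show ?case by simp
next
  case (Cons z ys)
  have "2 * y * z \<le> y^2 + z^2" using sum_squares_bound[of y z] by (simp add: power2_eq_square)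
  then show ?case using Cons by (simp add: algebra_simps)
qed

lemma half_le: "2 * a \<le> b \<Longrightarrow> a \<le> b / (2::real)" by linarith

lemma prod_expand:
  fixes p :: real and ys :: "real list"
  assumes p: "0 \<le> p" and ys: "\<forall>y\<in>set ys. 0 \<le> y \<and> p + y \<le> 1"
  shows "0 \<le> (\<Prod>y\<leftarrow>ys. p + y) - p^length ys - p^(length ys - 1) * sum_list ys \<and>
         (\<Prod>y\<leftarrow>ys. p + y) - p^length ys - p^(length ys - 1) * sum_list ys
            \<le> real (length ys) * sum_list (map (\<lambda>y. y^2) ys)"
  using ys
proof (induction ys)
  case Nil then show ?case by simp
next
  case (Cons y ys)
  have y: "0 \<le> y" "p + y \<le> 1" using Cons.prems by auto
  show ?case
  proof (cases ys)
    case Nil then show ?thesis by simp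
  next
    case (Cons z zs)
    then obtain n where n: "length ys = Suc n" by simp
    define P where "P = (\<Prod>y\<leftarrow>ys. p + y)"
    define S where "S = sum_list ys"
    define Q where "Q = sum_list (map (\<lambda>y. y^2) ys)"
    define R where "R = P - p^Suc n - p^n * S"
    from Cons.IH Cons.prems have IH: "0 \<le> R" "R \<le> real (Suc n) * Q"
      unfolding R_def P_def S_def Q_def n by auto
    have S0: "0 \<le> S" unfolding S_def using Cons.prems by (intro sum_list_nonneg) auto
    have p1: "p \<le> 1" using y by simp
    have pn: "0 \<le> p^n" "p^n \<le> 1" using p p1 by (auto intro: power_le_one)
    have id: "(p+y)*P - p^(Suc (Suc n)) - p^(Suc n)*(y+S) = (p+y)*R + y * p^n * S"
      unfolding R_def by (simp add: algebra_simps)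
    have t1: "(p+y)*R \<le> R" using IH y by (simp add: mult_left_le_one_le p)
    have "y * p^n \<le> y" using y pn by (simp add: mult_right_le_one_le)
    then have t2: "y * p^n * S \<le> y * S" using S0 by (rule mult_right_mono)
    have t3: "2 * (y * S) \<le> real (Suc n) * y^2 + Q" using two_y_S[of y ys] unfolding S_def Q_def n by (simp add: mult.assoc)
    have y2: "0 \<le> y^2" "0 \<le> Q" unfolding Q_def by (auto intro!: sum_list_nonneg)
    have lo: "0 \<le> (p+y)*R + y * p^n * S" using IH y p pn S0 by simp
    have "(p+y)*R + y * p^n * S \<le> real (Suc n) * Q + (real (Suc n) * y^2 + Q)/2"
    proof -
      have t3': "y * S \<le> (real (Suc n) * y^2 + Q)/2" using half_le[OF t3] .
      show ?thesis using t1 t2 t3' IH by linarith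
    qed
    also have "\<dots> \<le> real (Suc (Suc n)) * (y^2 + Q)" using y2 by (simp add: field_simps)
    finally have up: "(p+y)*R + y * p^n * S \<le> real (Suc (Suc n)) * (y^2 + Q)" .
    have G1: "(\<Prod>x\<leftarrow>y#ys. p+x) = (p+y)*P" "length (y#ys) = Suc (Suc n)" "sum_list (y#ys) = y + S"
      "sum_list (map (\<lambda>x. x^2) (y#ys)) = y^2 + Q"
      unfolding P_def S_def Q_def using n by simp_all
    show ?thesis unfolding G1 diff_Suc_1 id using lo up by blast
  qed
qed

lemma per_list:
  fixes p c \<alpha> \<beta> :: real
  assumes l: "sorted_wrt (<) l" "length l = Suc (Suc k2)"
    and p: "0 < p" and c: "0 \<le> c" "c < 1 - p" and a: "\<alpha> < 0" and b: "2*\<alpha> \<le> \<beta>"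
  defines "A \<equiv> p * (\<Prod>j\<in>{1..<length l}. (p + c * (real (l!j) - real (l!(j-1))) powr \<alpha>))"
  defines "La \<equiv> sum_list (map (\<lambda>d. real d powr \<alpha>) (gaps l))"
  defines "Lb \<equiv> sum_list (map (\<lambda>d. real d powr \<beta>) (gaps l))"
  shows "0 \<le> A/p - p^(Suc k2) - p^k2 * c * La"
    and "A/p - p^(Suc k2) - p^k2 * c * La \<le> real (Suc k2) * c^2 * Lb"
proof -
  define ds where "ds = gaps l"
  have ds_pos: "\<forall>d\<in>set ds. 0 < d" using gaps_pos[OF l(1)] by (auto simp: ds_def)
  have lds: "length ds = Suc k2" using l by (simp add: ds_def length_gaps)
  define ys where "ys = map (\<lambda>d. c * real d powr \<alpha>) ds"
  have A: "A/p = (\<Prod>y\<leftarrow>ys. p + y)"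
    unfolding A_def ys_def using prod_gaps[OF l(1), of "\<lambda>x. p + c * x powr \<alpha>"] p
    by (simp add: ds_def o_def)
  have dle: "real d powr \<alpha> \<le> 1" if "d \<in> set ds" for d
  proof -
    have "real d \<ge> 1" using ds_pos that by (simp add: Suc_le_eq)
    then show ?thesis using a powr_mono[of \<alpha> 0 "real d"] by simp
  qed
  have ys_ok: "\<forall>y\<in>set ys. 0 \<le> y \<and> p + y \<le> 1"
  proof
    fix y assume "y \<in> set ys"
    then obtain d where d: "d \<in> set ds" "y = c * real d powr \<alpha>" by (auto simp: ys_def)
    have "c * real d powr \<alpha> \<le> c * 1" using dle[OF d(1)] c by (intro mult_left_mono) auto
    then show "0 \<le> y \<and> p + y \<le> 1" using d c by auto
  qed
  have lys: "length ys = Suc k2" using lds by (simp add: ys_def)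
  have sy: "sum_list ys = c * La" unfolding ys_def La_def ds_def by (simp add: sum_list_const_mult)
  have sq: "sum_list (map (\<lambda>y. y^2) ys) \<le> c^2 * Lb"
  proof -
    have "sum_list (map (\<lambda>y. y^2) ys) = sum_list (map (\<lambda>d. c^2 * real d powr (2*\<alpha>)) ds)"
    proof -
      have sq1: "(c * real d powr \<alpha>)^2 = c^2 * real d powr (2*\<alpha>)" for d :: nat
        by (simp only: power2_eq_square mult_2 powr_add) (simp add: algebra_simps)
      show ?thesis unfolding ys_def by (simp add: o_def sq1)
    qed
    also have "\<dots> \<le> sum_list (map (\<lambda>d. c^2 * real d powr \<beta>) ds)"
    proof (rule sum_list_mono)
      fix d assume "d \<in> set ds"
      then have "real d \<ge> 1" using ds_pos by (simp add: Suc_le_eq)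
      then have "real d powr (2*\<alpha>) \<le> real d powr \<beta>" by (rule powr_mono[OF b])
      then show "c^2 * real d powr (2*\<alpha>) \<le> c^2 * real d powr \<beta>" by (simp add: mult_left_mono)
    qed
    also have "\<dots> = c^2 * Lb" unfolding Lb_def ds_def by (simp add: sum_list_const_mult)
    finally show ?thesis .
  qed
  from prod_expand[OF _ ys_ok] p have E:
    "0 \<le> (\<Prod>y\<leftarrow>ys. p + y) - p^length ys - p^(length ys - 1) * sum_list ys"
    "(\<Prod>y\<leftarrow>ys. p + y) - p^length ys - p^(length ys - 1) * sum_list ys
            \<le> real (length ys) * sum_list (map (\<lambda>y. y^2) ys)" by auto
  show "0 \<le> A/p - p^(Suc k2) - p^k2 * c * La"
    using E(1) unfolding A lys sy by (simp add: mult.assoc)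
  have X: "real (Suc k2) * sum_list (map (\<lambda>y. y^2) ys) \<le> real (Suc k2) * (c^2 * Lb)"
    using sq by (intro mult_left_mono) auto
  have F: "(\<Prod>y\<leftarrow>ys. p + y) - p^length ys - p^(length ys - 1) * sum_list ys \<le> real (Suc k2) * (c^2 * Lb)"
    using order_trans[OF E(2)[unfolded lys] X] unfolding lys .
  show "A/p - p^(Suc k2) - p^k2 * c * La \<le> real (Suc k2) * c^2 * Lb"
    unfolding A mult.assoc using F[unfolded lys sy diff_Suc_1 mult.assoc] .
qed



lemma f_asym:
  fixes \<alpha> :: real assumes a: "-1 < \<alpha>" "\<alpha> < 0"
  shows "(\<lambda>r. f (\<lambda>j. real j powr \<alpha>) (Suc k) r - 1 / pochhammer (\<alpha>+1) (Suc k) * real r powr (\<alpha> + 1 + real k))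
          \<in> o(\<lambda>r. real r powr (\<alpha> + 1 + real k))"
proof (induction k)
  case 0
  have "(\<lambda>r. f (\<lambda>j. real j powr \<alpha>) (Suc 0) r - 1 / (\<alpha>+1) * real r powr (\<alpha> + 1)) \<in> O(\<lambda>r::nat. 1 + 1/(\<alpha>+1))"
  proof (rule landau_o.big_mono, rule always_eventually, rule allI)
    fix r :: nat
    have "\<bar>(\<Sum>j\<in>{1..r}. real j powr \<alpha>) - real r powr (\<alpha>+1) / (\<alpha>+1)\<bar> \<le> 1 + 1/(\<alpha>+1)"
      using powsum_neg[of \<alpha> r] a by simp
    moreover have "0 < 1 + 1/(\<alpha>+1)" using a by (simp add: add_pos_pos)
    ultimately show "norm (f (\<lambda>j. real j powr \<alpha>) (Suc 0) r - 1 / (\<alpha>+1) * real r powr (\<alpha> + 1)) \<le> norm (1 + 1/(\<alpha>+1))"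
      by (simp add: f_def)
  qed
  also have "(\<lambda>r::nat. 1 + 1/(\<alpha>+1)) \<in> o(\<lambda>r. real r powr (\<alpha> + 1))"
    by (rule const_o) (use a in simp)
  finally show ?case by simp
next
  case (Suc k)
  define e where "e = \<alpha> + 1 + real k"
  have e: "0 < e" using a by (simp add: e_def)
  have P: "pochhammer (\<alpha>+1) (Suc (Suc k)) = (e + 1) * pochhammer (\<alpha>+1) (Suc k)"
    by (simp add: pochhammer_rec'[of _ "Suc k"] e_def algebra_simps)
  have pp: "pochhammer (\<alpha>+1) (Suc k) > 0" using a by (intro pochhammer_pos) simp
  have "(\<lambda>m. (\<Sum>r<m. f (\<lambda>j. real j powr \<alpha>) (Suc k) r) - (1 / pochhammer (\<alpha>+1) (Suc k))/(e+1) * real m powr (e+1))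
        \<in> o(\<lambda>m. real m powr (e+1))"
    by (rule prefix_asym[OF e]) (use Suc.IH in \<open>simp add: e_def\<close>)
  moreover have "(\<lambda>m. (\<Sum>r<m. f (\<lambda>j. real j powr \<alpha>) (Suc k) r) - (1 / pochhammer (\<alpha>+1) (Suc k))/(e+1) * real m powr (e+1))
     = (\<lambda>m. f (\<lambda>j. real j powr \<alpha>) (Suc (Suc k)) m - 1 / pochhammer (\<alpha>+1) (Suc (Suc k)) * real m powr (\<alpha> + 1 + real (Suc k)))"
    by (rule ext) (simp add: f_prefix P e_def add.assoc)
  moreover have "e + 1 = \<alpha> + 1 + real (Suc k)" by (simp add: e_def)
  ultimately show ?case by simp
qed

lemma q_asym:
  fixes \<alpha> :: real assumes a: "-1 < \<alpha>" "\<alpha> < 0"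
  shows "(\<lambda>m. q (\<lambda>j. real j powr \<alpha>) (Suc k) m - real k / pochhammer (\<alpha>+1) (Suc k) * real m powr (\<alpha> + 1 + real k))
          \<in> o(\<lambda>m. real m powr (\<alpha> + 1 + real k))"
proof (induction k)
  case 0
  show ?case by simp
next
  case (Suc k)
  define h where "h = (\<lambda>j::nat. real j powr \<alpha>)"
  define e where "e = \<alpha> + 1 + real k"
  have e: "0 < e" using a by (simp add: e_def)
  have P: "pochhammer (\<alpha>+1) (Suc (Suc k)) = (e + 1) * pochhammer (\<alpha>+1) (Suc k)"
    by (simp add: pochhammer_rec'[of _ "Suc k"] e_def algebra_simps)
  define C where "C = (1 + real k) / pochhammer (\<alpha>+1) (Suc k)"
  have "(\<lambda>r. (f h (Suc k) r - 1 / pochhammer (\<alpha>+1) (Suc k) * real r powr e)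
           + (q h (Suc k) r - real k / pochhammer (\<alpha>+1) (Suc k) * real r powr e)) \<in> o(\<lambda>r. real r powr e)"
    by (rule sum_in_smallo(1)) (use f_asym[OF a, of k] Suc.IH in \<open>simp_all add: h_def e_def\<close>)
  moreover have "(\<lambda>r. (f h (Suc k) r - 1 / pochhammer (\<alpha>+1) (Suc k) * real r powr e)
           + (q h (Suc k) r - real k / pochhammer (\<alpha>+1) (Suc k) * real r powr e))
       = (\<lambda>r. (f h (Suc k) r + q h (Suc k) r) - C * real r powr e)"
    by (rule ext) (simp add: C_def add_divide_distrib algebra_simps)
  ultimately have A: "(\<lambda>r. (f h (Suc k) r + q h (Suc k) r) - C * real r powr e) \<in> o(\<lambda>r. real r powr e)"
    by simp
  have "(\<lambda>m. (\<Sum>r<m. f h (Suc k) r + q h (Suc k) r) - C/(e+1) * real m powr (e+1)) \<in> o(\<lambda>m. real m powr (e+1))"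
    by (rule prefix_asym[OF e A])
  moreover have "(\<lambda>m. (\<Sum>r<m. f h (Suc k) r + q h (Suc k) r) - C/(e+1) * real m powr (e+1))
     = (\<lambda>m. q h (Suc (Suc k)) m - real (Suc k) / pochhammer (\<alpha>+1) (Suc (Suc k)) * real m powr (\<alpha> + 1 + real (Suc k)))"
  proof -
    have eS: "e + 1 = \<alpha> + 1 + real (Suc k)" by (simp add: e_def)
    have cst: "C/(e+1) = real (Suc k) / pochhammer (\<alpha>+1) (Suc (Suc k))"
      unfolding P C_def by (simp add: add.commute)
    show ?thesis by (rule ext) (simp only: q.simps cst, simp only: eS)
  qed
  moreover have "e + 1 = \<alpha> + 1 + real (Suc k)" by (simp add: e_def)
  ultimately show ?case by (simp add: h_def)
qed

lemma q_bigo: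
  fixes \<alpha> :: real assumes a: "-1 < \<alpha>" "\<alpha> < 0"
  shows "(\<lambda>m. q (\<lambda>j. real j powr \<alpha>) (Suc k) m) \<in> O(\<lambda>m. real m powr (\<alpha> + 1 + real k))"
proof -
  define C where "C = real k / pochhammer (\<alpha>+1) (Suc k)"
  have "(\<lambda>m. (q (\<lambda>j. real j powr \<alpha>) (Suc k) m - C * real m powr (\<alpha> + 1 + real k)) + C * real m powr (\<alpha> + 1 + real k))
         \<in> O(\<lambda>m. real m powr (\<alpha> + 1 + real k))"
  proof (rule sum_in_bigo(1))
    show "(\<lambda>m. q (\<lambda>j. real j powr \<alpha>) (Suc k) m - C * real m powr (\<alpha> + 1 + real k)) \<in> O(\<lambda>m. real m powr (\<alpha> + 1 + real k))"
      using landau_o.small_imp_big[OF q_asym[OF a, of k]] by (simp only: C_def)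
    show "(\<lambda>m. C * real m powr (\<alpha> + 1 + real k)) \<in> O(\<lambda>m. real m powr (\<alpha> + 1 + real k))"
      by simp
  qed
  then show ?thesis by simp
qed

theorem lemma6p4:
  fixes M :: "'a measure" and X :: "nat \<Rightarrow> 'a \<Rightarrow> nat"
    and p H c :: real and k :: nat
  assumes "GBP_I M X p H c"
    and "1/2 < H"
    and "2 \<le> k"
  shows "(\<lambda>n::nat.
            (\<Sum>S | S \<subseteq> {1..n} \<and> card S = k.
                measure M {\<omega> \<in> space M. \<forall>i\<in>S. X i \<omega> = 1})
            - real (n choose k) * p ^ k
            - (Gamma (2*H - 1) / Gamma (2*H + real k - 1))
                * (fact (k - 1) / fact (k - 2)) * c * p ^ (k - 1)
                * real n powr (2*H - 2 + real k))
         \<in> o(\<lambda>n::nat. real n powr (2*H - 2 + real k))"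
proof -
  from assms(1) have gp: "gbp_params p H c"
    and meas: "\<And>is. is \<noteq> [] \<Longrightarrow> sorted_wrt (<) is \<Longrightarrow>
        measure M {\<omega> \<in> space M. \<forall>i\<in>set is. X i \<omega> = 1} =
        p * (\<Prod>j\<in>{1..<length is}. (p + c * (real (is ! j) - real (is ! (j - 1))) powr (2*H - 2)))"
    unfolding GBP_I_def by auto
  from gp have p0: "0 < p" and H1: "H < 1" and c0: "0 \<le> c" and c1: "c < 1 - p"
    unfolding gbp_params_def by auto
  obtain k2 where k2: "k = Suc (Suc k2)" using assms(3) by (metis add_2_eq_Suc le_Suc_ex)
  define \<alpha> where "\<alpha> = 2*H - 2"
  have a: "-1 < \<alpha>" "\<alpha> < 0" using assms(2) H1 by (auto simp: \<alpha>_def)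
  define \<beta> where "\<beta> = max (2*\<alpha>) ((\<alpha>-1)/2)"
  have b: "-1 < \<beta>" "\<beta> < \<alpha>" "2*\<alpha> \<le> \<beta>" using a by (auto simp: \<beta>_def max_def)
  have b0: "\<beta> < 0" using a b by simp
  define ha where "ha = (\<lambda>j::nat. real j powr \<alpha>)"
  define hb where "hb = (\<lambda>j::nat. real j powr \<beta>)"
  define E where "E = 2*H - 2 + real k"
  have Ea: "\<alpha> + 1 + real (Suc k2) = E" by (simp add: \<alpha>_def E_def k2)
  have Eb: "\<beta> + 1 + real (Suc k2) < E" using b Ea by simp
  define A where "A S = measure M {\<omega> \<in> space M. \<forall>i\<in>S. X i \<omega> = 1}" for S
  define La where "La S = sum_list (map ha (gaps (sorted_list_of_set S)))" for S
  define Lb where "Lb S = sum_list (map hb (gaps (sorted_list_of_set S)))" for S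
  define R where "R S = A S / p - p^(Suc k2) - p^k2 * c * La S" for S
  define Fam where "Fam n = {S. S \<subseteq> {1..n} \<and> card S = k}" for n :: nat
  have RS: "0 \<le> R S \<and> R S \<le> real (Suc k2) * c^2 * Lb S" if "S \<in> Fam n" for S n
  proof -
    have fin: "finite S" using that by (auto simp: Fam_def intro: finite_subset)
    define l where "l = sorted_list_of_set S"
    have l: "sorted_wrt (<) l" "length l = Suc (Suc k2)" "set l = S"
      using fin that k2 by (auto simp: l_def Fam_def)
    have "l \<noteq> []" using l(2) by auto
    have AS: "A S = p * (\<Prod>j\<in>{1..<length l}. (p + c * (real (l!j) - real (l!(j-1))) powr \<alpha>))"
      using meas[OF \<open>l\<noteq>[]\<close> l(1)] l(3) by (simp add: A_def \<alpha>_def)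
    have LaS: "La S = sum_list (map (\<lambda>d. real d powr \<alpha>) (gaps l))"
      by (simp add: La_def ha_def l_def)
    have LbS: "Lb S = sum_list (map (\<lambda>d. real d powr \<beta>) (gaps l))"
      by (simp add: Lb_def hb_def l_def)
    show ?thesis using per_list[OF l(1) l(2) p0 c0 c1 a(2) b(3)]
      unfolding R_def AS LaS LbS by auto
  qed
  have Lsum: "(\<Sum>S\<in>Fam n. La S) = q ha k n" for n
    using Qh_q[of ha 1 n "Suc k2"] unfolding Qh_def Fam_def La_def k2 by simp
  have Lbsum: "(\<Sum>S\<in>Fam n. Lb S) = q hb k n" for n
    using Qh_q[of hb 1 n "Suc k2"] unfolding Qh_def Fam_def Lb_def k2 by simp
  have card: "card (Fam n) = n choose k" for n
    using n_subsets[of "{1..n}" k] by (simp add: Fam_def)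
  have sumA: "(\<Sum>S\<in>Fam n. A S) = real (n choose k) * p^k + c * p^(Suc k2) * q ha k n + p * (\<Sum>S\<in>Fam n. R S)" for n
  proof -
    have eqS: "A S = p * p^(Suc k2) + c * p^(Suc k2) * La S + p * R S" for S
      using p0 unfolding R_def by (simp add: field_simps)
    have "(\<Sum>S\<in>Fam n. A S) = (\<Sum>S\<in>Fam n. p * p^(Suc k2) + c * p^(Suc k2) * La S + p * R S)"
      by (simp add: eqS)
    also have "\<dots> = real (card (Fam n)) * (p * p^(Suc k2)) + c * p^(Suc k2) * (\<Sum>S\<in>Fam n. La S) + p * (\<Sum>S\<in>Fam n. R S)"
      by (simp add: sum.distrib sum_distrib_left)
    finally show ?thesis using card Lsum k2 by simp
  qed
  have Rsum: "0 \<le> (\<Sum>S\<in>Fam n. R S) \<and> (\<Sum>S\<in>Fam n. R S) \<le> real (Suc k2) * c^2 * q hb k n" for n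
  proof -
    have "0 \<le> (\<Sum>S\<in>Fam n. R S)" using RS by (intro sum_nonneg) blast
    moreover have "(\<Sum>S\<in>Fam n. R S) \<le> (\<Sum>S\<in>Fam n. real (Suc k2) * c^2 * Lb S)"
      using RS by (intro sum_mono) blast
    moreover have "(\<Sum>S\<in>Fam n. real (Suc k2) * c^2 * Lb S) = real (Suc k2) * c^2 * q hb k n"
      by (simp add: sum_distrib_left[symmetric] Lbsum)
    ultimately show ?thesis by simp
  qed
  define Cq where "Cq = real (Suc k2) / pochhammer (\<alpha>+1) (Suc (Suc k2))"
  define K where "K = (Gamma (2*H - 1) / Gamma (2*H + real k - 1)) * (fact (k - 1) / fact (k - 2)) * c * p ^ (k - 1)"
  have K: "K = c * p^(Suc k2) * Cq"
  proof -
    have z: "\<alpha> + 1 \<notin> \<int>\<^sub>\<le>\<^sub>0" using a by auto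
    have g0: "Gamma (\<alpha>+1) \<noteq> 0" using Gamma_nonzero[OF z] .
    have e1: "\<alpha> + 1 + of_nat (Suc (Suc k2)) = 2*H + real k - 1" by (simp add: \<alpha>_def k2)
    have e2: "\<alpha> + 1 = 2*H - 1" by (simp add: \<alpha>_def)
    have P: "pochhammer (2*H - 1) (Suc (Suc k2)) = Gamma (2*H + real k - 1) / Gamma (2*H - 1)"
      using pochhammer_Gamma[OF z, of "Suc (Suc k2)", unfolded e1, unfolded e2] .
    have F: "fact (k - 1) / fact (k - 2) = (real (Suc k2) :: real)"
      by (simp add: k2 del: of_nat_Suc)
    have g1: "Gamma (2*H - 1) \<noteq> 0" using g0 unfolding e2 .
    show ?thesis unfolding K_def Cq_def e2 P F using g1
      by (simp add: k2 field_simps)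
  qed
  have T1: "(\<lambda>n. c * p^(Suc k2) * (q ha k n - Cq * real n powr E)) \<in> o(\<lambda>n. real n powr E)"
  proof -
    have "(\<lambda>n. q ha k n - Cq * real n powr E) \<in> o(\<lambda>n. real n powr E)"
      using q_asym[OF a, of "Suc k2"] unfolding Ea ha_def Cq_def k2 .
    then show ?thesis by (cases "c = 0") (auto simp: p0)
  qed
  have T2: "(\<lambda>n. p * (\<Sum>S\<in>Fam n. R S)) \<in> o(\<lambda>n. real n powr E)"
  proof -
    have "(\<lambda>n. p * (\<Sum>S\<in>Fam n. R S)) \<in> O(\<lambda>n. p * real (Suc k2) * c^2 * q hb k n)"
    proof (rule landau_o.big_mono, rule always_eventually, rule allI)
      fix n
      show "norm (p * (\<Sum>S\<in>Fam n. R S)) \<le> norm (p * real (Suc k2) * c^2 * q hb k n)"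
      proof -
        have "norm (p * (\<Sum>S\<in>Fam n. R S)) = p * (\<Sum>S\<in>Fam n. R S)" using Rsum[of n] p0 by simp
        also have "\<dots> \<le> p * (real (Suc k2) * c^2 * q hb k n)"
          using Rsum[of n] p0 by (intro mult_left_mono) auto
        also have "\<dots> = p * real (Suc k2) * c^2 * q hb k n" by (simp add: mult.assoc)
        also have "\<dots> \<le> norm (p * real (Suc k2) * c^2 * q hb k n)" by (simp only: real_norm_def abs_ge_self)
        finally show ?thesis .
      qed
    qed
    also have "(\<lambda>n. p * real (Suc k2) * c^2 * q hb k n) \<in> O(\<lambda>n. q hb k n)"
      by simp
    also have "(\<lambda>n. q hb k n) \<in> O(\<lambda>n. real n powr (\<beta> + 1 + real (Suc k2)))"
      using q_bigo[OF b(1) b0, of "Suc k2"] unfolding hb_def k2 .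
    also have "(\<lambda>n. real n powr (\<beta> + 1 + real (Suc k2))) \<in> o(\<lambda>n. real n powr E)"
      using Eb by (rule powr_o)
    finally show ?thesis .
  qed
  have eq: "(\<lambda>n::nat.
            (\<Sum>S | S \<subseteq> {1..n} \<and> card S = k.
                measure M {\<omega> \<in> space M. \<forall>i\<in>S. X i \<omega> = 1})
            - real (n choose k) * p ^ k
            - (Gamma (2*H - 1) / Gamma (2*H + real k - 1))
                * (fact (k - 1) / fact (k - 2)) * c * p ^ (k - 1)
                * real n powr (2*H - 2 + real k))
      = (\<lambda>n. c * p^(Suc k2) * (q ha k n - Cq * real n powr E) + p * (\<Sum>S\<in>Fam n. R S))"
  proof (rule ext)
    fix n :: nat
    have "(\<Sum>S | S \<subseteq> {1..n} \<and> card S = k. measure M {\<omega> \<in> space M. \<forall>i\<in>S. X i \<omega> = 1})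
          = (\<Sum>S\<in>Fam n. A S)" by (simp add: Fam_def A_def)
    then show "(\<Sum>S | S \<subseteq> {1..n} \<and> card S = k.
                measure M {\<omega> \<in> space M. \<forall>i\<in>S. X i \<omega> = 1})
            - real (n choose k) * p ^ k
            - (Gamma (2*H - 1) / Gamma (2*H + real k - 1))
                * (fact (k - 1) / fact (k - 2)) * c * p ^ (k - 1)
                * real n powr (2*H - 2 + real k)
          = c * p^(Suc k2) * (q ha k n - Cq * real n powr E) + p * (\<Sum>S\<in>Fam n. R S)"
      unfolding K_def[symmetric] E_def[symmetric] K sumA by (simp add: algebra_simps)
  qed
  show ?thesis unfolding eq unfolding E_def[symmetric] using sum_in_smallo(1)[OF T1 T2] .
qed

end
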